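(* Let $\mu$ be a strict partition and $S=\mathcal Q(\mu,\mu+(1))$. Then $$\mathcal E F_S(z,t)=F_S(z,1)+F_{ES}(z,t)\qquad\text{and}\qquad \mathcal N F_S(z,t)=F_{MS}(z,1)+F_{NS}(z,t).$$
   Context: Partitions are weakly decreasing sequences of nonnegative integers with finitely many nonzero parts, identified with Ferrers boards; $|\alpha|$ is the weight. $\alpha$ contains $\mu$ if deleting some rows and some columns of the Ferrers board of $\alpha$ and top/left-justifying yields $\mu$; otherwise $\alpha$ avoids $\mu$. Strict: positive parts distinct. $\alpha+\beta$ is componentwise sum; $(w^m)$ is the partition with $m$ parts equal to $w$. $m(\alpha)$ is the multiplicity of the largest part of $\alpha$. $\mathcal Q(\tau,\mu)$ is the set of partitions of positive weight containing $\tau$ and avoiding $\mu$. For a set $S$ of partitions, $F_S(z,t)=\sum_{\alpha\in S}z^{|\alpha|}t^{m(\alpha)}$. For a partition $\alpha$: $E(\alpha)=\{\alpha+(1^c):0<c\le m(\alpha)\}$, $M(\alpha)=\{\alpha+(w^{m(\alpha)}):w\ge0\}$, $N(\alpha)=\{\alpha+(w^{m(\alpha)})+(1^c):w\ge0,\ 0<c<m(\alpha)\}$; $ES,MS,NS$ are the unions over $\alpha\in S$. Operators on $G(z,t)=\sum_{n\ge1}\sum_{m\ge0}a_{n,m}z^nt^m$: $\mathcal E G(z,t)=\frac{G(z,1)-ztG(z,zt)}{1-zt}$ and $\mathcal N G(z,t)=G(z,0)+\sum_{n\ge1}\sum_{m\ge1}a_{n,m}\frac{1}{1-z^m}\cdot\frac{1-(tz)^m}{1-tz}z^n$.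 *)

theory Defs
  imports "HOL-Analysis.Analysis"
begin

text \<open>Partitions are represented as functions nat => nat (the sequence of parts,
indexed from 0), weakly decreasing and with finitely many nonzero parts.\<close>

definition partition :: "(nat \<Rightarrow> nat) \<Rightarrow> bool" where
  "partition \<alpha> \<longleftrightarrow> (\<forall>i. \<alpha> (Suc i) \<le> \<alpha> i) \<and> finite {i. \<alpha> i \<noteq> 0}"

definition weight :: "(nat \<Rightarrow> nat) \<Rightarrow> nat" where
  "weight \<alpha> = (\<Sum>i\<in>{i. \<alpha> i \<noteq> 0}. \<alpha> i)"

definition strict_partition :: "(nat \<Rightarrow> nat) \<Rightarrow> bool" where
  "strict_partition \<alpha> \<longleftrightarrow> partition \<alpha> \<and>
     (\<forall>i j. i \<noteq> j \<longrightarrow> 0 < \<alpha> i \<longrightarrow> \<alpha> i \<noteq> \<alpha> j)"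

text \<open>Containment: keep the rows f 0 < f 1 < ... and the columns in C; the row
f a of the Ferrers board of alpha then contributes the cells of C left of alpha (f a),
which after left-justification is a row of length card {c in C. c < alpha (f a)}.
(Rows beyond the length of alpha are zero rows, so taking infinitely many kept
rows loses no generality.)\<close>

definition contains :: "(nat \<Rightarrow> nat) \<Rightarrow> (nat \<Rightarrow> nat) \<Rightarrow> bool" where
  "contains \<alpha> \<mu> \<longleftrightarrow> (\<exists>f C. strict_mono f \<and> (\<forall>a. \<mu> a = card {c\<in>C. c < \<alpha> (f a)}))"

definition padd :: "(nat \<Rightarrow> nat) \<Rightarrow> (nat \<Rightarrow> nat) \<Rightarrow> (nat \<Rightarrow> nat)" where
  "padd \<alpha> \<beta> = (\<lambda>i. \<alpha> i + \<beta> i)"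

definition rect :: "nat \<Rightarrow> nat \<Rightarrow> (nat \<Rightarrow> nat)" where
  "rect w m = (\<lambda>i. if i < m then w else 0)"

text \<open>Multiplicity of the largest part (0 for the empty partition).\<close>
definition mult :: "(nat \<Rightarrow> nat) \<Rightarrow> nat" where
  "mult \<alpha> = card {i. 0 < \<alpha> i \<and> \<alpha> i = \<alpha> 0}"

definition Q :: "(nat \<Rightarrow> nat) \<Rightarrow> (nat \<Rightarrow> nat) \<Rightarrow> (nat \<Rightarrow> nat) set" where
  "Q \<tau> \<mu> = {\<alpha>. partition \<alpha> \<and> 0 < weight \<alpha> \<and> contains \<alpha> \<tau> \<and> \<not> contains \<alpha> \<mu>}"

definition Eset :: "(nat \<Rightarrow> nat) \<Rightarrow> (nat \<Rightarrow> nat) set" where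
  "Eset \<alpha> = {padd \<alpha> (rect 1 c) | c. 0 < c \<and> c \<le> mult \<alpha>}"

definition Mset :: "(nat \<Rightarrow> nat) \<Rightarrow> (nat \<Rightarrow> nat) set" where
  "Mset \<alpha> = {padd \<alpha> (rect w (mult \<alpha>)) | w. True}"

definition Nset :: "(nat \<Rightarrow> nat) \<Rightarrow> (nat \<Rightarrow> nat) set" where
  "Nset \<alpha> = {padd (padd \<alpha> (rect w (mult \<alpha>))) (rect 1 c) | w c. 0 < c \<and> c < mult \<alpha>}"

definition ES :: "(nat \<Rightarrow> nat) set \<Rightarrow> (nat \<Rightarrow> nat) set" where
  "ES S = (\<Union>\<alpha>\<in>S. Eset \<alpha>)"
definition MS :: "(nat \<Rightarrow> nat) set \<Rightarrow> (nat \<Rightarrow> nat) set" where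
  "MS S = (\<Union>\<alpha>\<in>S. Mset \<alpha>)"
definition NS :: "(nat \<Rightarrow> nat) set \<Rightarrow> (nat \<Rightarrow> nat) set" where
  "NS S = (\<Union>\<alpha>\<in>S. Nset \<alpha>)"

text \<open>Generating functions, read as complex-analytic functions (|z| < 1, |t| <= 1).
A series G is given by its coefficient array a n m (coefficient of z^n t^m).\<close>

definition gf :: "(nat \<Rightarrow> nat \<Rightarrow> nat) \<Rightarrow> complex \<Rightarrow> complex \<Rightarrow> complex" where
  "gf a z t = infsum (\<lambda>(n, m). of_nat (a n m) * z ^ n * t ^ m) UNIV"

definition coeffs :: "(nat \<Rightarrow> nat) set \<Rightarrow> nat \<Rightarrow> nat \<Rightarrow> nat" where
  "coeffs S n m = card {\<alpha>\<in>S. weight \<alpha> = n \<and> mult \<alpha> = m}"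

definition F :: "(nat \<Rightarrow> nat) set \<Rightarrow> complex \<Rightarrow> complex \<Rightarrow> complex" where
  "F S z t = gf (coeffs S) z t"

definition opE :: "(nat \<Rightarrow> nat \<Rightarrow> nat) \<Rightarrow> complex \<Rightarrow> complex \<Rightarrow> complex" where
  "opE a z t = (gf a z 1 - z * t * gf a z (z * t)) / (1 - z * t)"

definition opN :: "(nat \<Rightarrow> nat \<Rightarrow> nat) \<Rightarrow> complex \<Rightarrow> complex \<Rightarrow> complex" where
  "opN a z t = gf a z 0 +
     infsum (\<lambda>(n, m). of_nat (a n m) * (1 / (1 - z ^ m)) * ((1 - (t * z) ^ m) / (1 - t * z)) * z ^ n)
       {(n, m). 1 \<le> n \<and> 1 \<le> m}"

end

theory Submission
  imports Defs
begin


lemma part_dec: assumes "partition \<alpha>" "i \<le> j" shows "\<alpha> j \<le> \<alpha> i"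
proof -
  have "\<And>n. \<alpha> (Suc n) \<le> \<alpha> n" using assms(1) unfolding partition_def by blast
  then show ?thesis using lift_Suc_antimono_le[of \<alpha>, OF _ assms(2)] by blast
qed

lemma weight_eq_sum: assumes "\<And>i. i \<ge> N \<Longrightarrow> \<alpha> i = 0" shows "weight \<alpha> = sum \<alpha> {..<N}"
proof -
  have "{i. \<alpha> i \<noteq> 0} \<subseteq> {..<N}"
  proof
    fix i assume "i \<in> {i. \<alpha> i \<noteq> 0}"
    then have "\<alpha> i \<noteq> 0" by simp
    then have "\<not> N \<le> i" using assms[of i] by linarith
    then show "i \<in> {..<N}" by simp
  qed
  show ?thesis unfolding weight_def
    by (rule sum.mono_neutral_left) (use \<open>{i. \<alpha> i \<noteq> 0} \<subseteq> {..<N}\<close> in auto)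
qed

lemma part_bound: assumes "partition \<alpha>" shows "\<exists>N. \<forall>i\<ge>N. \<alpha> i = 0"
proof -
  have "finite {i. \<alpha> i \<noteq> 0}" using assms unfolding partition_def by (rule conjunct2)
  then obtain N where N: "\<And>i. i \<in> {i. \<alpha> i \<noteq> 0} \<Longrightarrow> i < N" using finite_nat_bounded by (metis lessThan_iff subsetD)
  have "\<alpha> i = 0" if "i \<ge> N" for i
  proof (rule ccontr)
    assume "\<alpha> i \<noteq> 0" then have "i < N" using N by simp
    then show False using that by simp
  qed
  then show ?thesis by auto
qed

lemma part_zero_beyond_weight: assumes "partition \<alpha>" "i \<ge> weight \<alpha>" shows "\<alpha> i = 0"
proof (rule ccontr)
  assume h: "\<alpha> i \<noteq> 0"
  obtain N where N: "\<forall>i\<ge>N. \<alpha> i = 0" using part_bound assms by blast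
  have "i < N" using N h by (meson not_le)
  have "sum (\<lambda>_. 1) {..i} \<le> sum \<alpha> {..i}"
    by (intro sum_mono) (use h part_dec[OF assms(1)] in \<open>fastforce\<close>)
  also have "\<dots> \<le> sum \<alpha> {..<N}" using \<open>i<N\<close> by (intro sum_mono2) auto
  also have "\<dots> = weight \<alpha>" using N weight_eq_sum by metis
  finally show False using assms(2) by simp
qed

lemma part_le_weight: assumes "partition \<alpha>" shows "\<alpha> i \<le> weight \<alpha>"
proof -
  obtain N where N: "\<forall>i\<ge>N. \<alpha> i = 0" using part_bound assms by blast
  show ?thesis
  proof (cases "i < N")
    case True
    then have "\<alpha> i \<le> sum \<alpha> {..<N}" by (intro member_le_sum) auto
    then show ?thesis using N weight_eq_sum by metis
  qed (use N in auto)
qed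

lemma finite_weight: "finite {\<alpha>. partition \<alpha> \<and> weight \<alpha> = n}"
proof -
  have "{\<alpha>. partition \<alpha> \<and> weight \<alpha> = n} \<subseteq>
     {f. \<forall>x. (x \<in> {..<n} \<longrightarrow> f x \<in> {..n}) \<and> (x \<notin> {..<n} \<longrightarrow> f x = 0)}"
  proof
    fix \<alpha> assume "\<alpha> \<in> {\<alpha>. partition \<alpha> \<and> weight \<alpha> = n}"
    then have a: "partition \<alpha>" "weight \<alpha> = n" by auto
    have "\<alpha> x \<in> {..n}" for x using part_le_weight[OF a(1), of x] a(2) by simp
    moreover have "\<alpha> x = 0" if "x \<notin> {..<n}" for x
      using part_zero_beyond_weight[OF a(1), of x] a(2) that by simp
    ultimately show "\<alpha> \<in> {f. \<forall>x. (x \<in> {..<n} \<longrightarrow> f x \<in> {..n}) \<and> (x \<notin> {..<n} \<longrightarrow> f x = 0)}" by simp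
  qed
  moreover have "finite {f. \<forall>x. (x \<in> {..<n} \<longrightarrow> f x \<in> {..n}) \<and> (x \<notin> {..<n} \<longrightarrow> f x = (0::nat))}"
    by (rule finite_set_of_finite_funs) auto
  ultimately show ?thesis by (rule finite_subset)
qed

lemma weight_pos_iff: assumes "partition \<alpha>" shows "0 < weight \<alpha> \<longleftrightarrow> 0 < \<alpha> 0"
proof
  assume "0 < weight \<alpha>"
  then obtain i where "\<alpha> i \<noteq> 0" unfolding weight_def by (metis (mono_tags) mem_Collect_eq not_gr0 sum.neutral)
  then show "0 < \<alpha> 0" using part_dec[OF assms, of 0 i] by simp
next
  assume "0 < \<alpha> 0" then show "0 < weight \<alpha>" using part_le_weight[OF assms, of 0] by simp
qed



lemma part_padd: assumes "partition \<alpha>" "partition \<beta>" shows "partition (padd \<alpha> \<beta>)"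
proof -
  have "padd \<alpha> \<beta> (Suc i) \<le> padd \<alpha> \<beta> i" for i
    using part_dec[OF assms(1), of i "Suc i"] part_dec[OF assms(2), of i "Suc i"] by (simp add: padd_def)
  moreover have "{i. padd \<alpha> \<beta> i \<noteq> 0} \<subseteq> {i. \<alpha> i \<noteq> 0} \<union> {i. \<beta> i \<noteq> 0}" by (auto simp: padd_def)
  moreover have "finite ({i. \<alpha> i \<noteq> 0} \<union> {i. \<beta> i \<noteq> 0})" using assms unfolding partition_def by simp
  moreover have "finite {i. padd \<alpha> \<beta> i \<noteq> 0}" using calculation(2,3) by (rule finite_subset)
  ultimately show ?thesis unfolding partition_def by simp
qed

lemma part_rect: "partition (rect w m)"
proof -
  have "{i. rect w m i \<noteq> 0} \<subseteq> {..<m}" by (auto simp: rect_def split: if_splits)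
  then have "finite {i. rect w m i \<noteq> 0}" by (rule finite_subset) simp
  moreover have "rect w m (Suc i) \<le> rect w m i" for i by (simp add: rect_def)
  ultimately show ?thesis unfolding partition_def by simp
qed

lemma weight_padd: assumes "partition \<alpha>" "partition \<beta>" shows "weight (padd \<alpha> \<beta>) = weight \<alpha> + weight \<beta>"
proof -
  obtain N1 where N1: "\<forall>i\<ge>N1. \<alpha> i = 0" using part_bound[OF assms(1)] by blast
  obtain N2 where N2: "\<forall>i\<ge>N2. \<beta> i = 0" using part_bound[OF assms(2)] by blast
  define N where "N = max N1 N2"
  have a: "\<And>i. i \<ge> N \<Longrightarrow> \<alpha> i = 0" using N1 N_def by simp
  have b: "\<And>i. i \<ge> N \<Longrightarrow> \<beta> i = 0" using N2 N_def by simp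
  have c: "\<And>i. i \<ge> N \<Longrightarrow> padd \<alpha> \<beta> i = 0" using a b by (simp add: padd_def)
  show ?thesis using weight_eq_sum[OF a] weight_eq_sum[OF b] weight_eq_sum[OF c]
    by (simp add: padd_def sum.distrib)
qed

lemma weight_rect: "weight (rect w m) = w * m"
proof -
  have "weight (rect w m) = sum (rect w m) {..<m}" by (rule weight_eq_sum) (simp add: rect_def)
  also have "\<dots> = sum (\<lambda>_. w) {..<m}" by (rule sum.cong) (auto simp: rect_def)
  finally show ?thesis by simp
qed

lemma downclosed_finite:
  fixes K :: "nat set"
  assumes "finite K" "\<And>i j. j \<in> K \<Longrightarrow> i \<le> j \<Longrightarrow> i \<in> K"
  shows "K = {..<card K}"
proof -
  have "\<exists>n. n \<notin> K" using assms(1) by (meson ex_new_if_finite infinite_UNIV_nat)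
  define n where "n = (LEAST n. n \<notin> K)"
  have nK: "n \<notin> K" unfolding n_def using \<open>\<exists>n. n \<notin> K\<close> by (rule LeastI_ex)
  have "K = {..<n}"
  proof
    show "K \<subseteq> {..<n}"
    proof
      fix i assume "i \<in> K"
      show "i \<in> {..<n}"
      proof (rule ccontr)
        assume "i \<notin> {..<n}" then have "n \<le> i" by simp
        then have "n \<in> K" using assms(2) \<open>i \<in> K\<close> by blast
        then show False using nK by simp
      qed
    qed
    show "{..<n} \<subseteq> K"
    proof
      fix i assume "i \<in> {..<n}" then have "i < n" by simp
      then show "i \<in> K" unfolding n_def using not_less_Least by blast
    qed
  qed
  then show ?thesis by simp
qed

definition topset :: "(nat \<Rightarrow> nat) \<Rightarrow> nat set" where
  "topset \<alpha> = {i. 0 < \<alpha> i \<and> \<alpha> i = \<alpha> 0}"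

lemma topset_eq: assumes "partition \<alpha>" shows "topset \<alpha> = {..<mult \<alpha>}"
proof -
  have fin: "finite (topset \<alpha>)"
  proof -
    have "topset \<alpha> \<subseteq> {i. \<alpha> i \<noteq> 0}" by (auto simp: topset_def)
    moreover have "finite {i. \<alpha> i \<noteq> 0}" using assms unfolding partition_def by (rule conjunct2)
    ultimately show ?thesis by (rule finite_subset)
  qed
  have dc: "i \<in> topset \<alpha>" if "j \<in> topset \<alpha>" "i \<le> j" for i j
  proof -
    have "\<alpha> j \<le> \<alpha> i" "\<alpha> i \<le> \<alpha> 0" using part_dec[OF assms] that(2) by auto
    then show ?thesis using that(1) unfolding topset_def by simp
  qed
  have "topset \<alpha> = {..<card (topset \<alpha>)}" by (rule downclosed_finite[OF fin], erule dc, assumption)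
  then show ?thesis unfolding mult_def topset_def by simp
qed

lemma mult_top: assumes "partition \<alpha>" "0 < \<alpha> 0" shows "i < mult \<alpha> \<longleftrightarrow> \<alpha> i = \<alpha> 0"
proof -
  have "i < mult \<alpha> \<longleftrightarrow> i \<in> topset \<alpha>" using topset_eq[OF assms(1)] by simp
  also have "\<dots> \<longleftrightarrow> \<alpha> i = \<alpha> 0" using assms(2) unfolding topset_def by auto
  finally show ?thesis .
qed

lemma mult_pos: assumes "partition \<alpha>" "0 < \<alpha> 0" shows "0 < mult \<alpha>"
  using mult_top[OF assms, of 0] by simp

lemma mult_below: assumes "partition \<alpha>" "0 < \<alpha> 0" "mult \<alpha> \<le> i" shows "\<alpha> i < \<alpha> 0"
proof -
  have "\<alpha> i \<noteq> \<alpha> 0" using mult_top[OF assms(1,2), of i] assms(3) by simp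
  moreover have "\<alpha> i \<le> \<alpha> 0" using part_dec[OF assms(1)] by simp
  ultimately show ?thesis by simp
qed

lemma mult_char: assumes "0 < k" "\<And>i. i < k \<Longrightarrow> \<beta> i = \<beta> 0" "\<And>i. k \<le> i \<Longrightarrow> \<beta> i < \<beta> 0"
  shows "mult \<beta> = k"
proof -
  have "\<beta> 0 > 0" using assms(3)[of k] by simp
  have "{i. 0 < \<beta> i \<and> \<beta> i = \<beta> 0} = {..<k}"
  proof
    show "{i. 0 < \<beta> i \<and> \<beta> i = \<beta> 0} \<subseteq> {..<k}"
    proof
      fix i assume "i \<in> {i. 0 < \<beta> i \<and> \<beta> i = \<beta> 0}"
      then have "\<beta> i = \<beta> 0" by simp
      then have "\<not> k \<le> i" using assms(3)[of i] by auto
      then show "i \<in> {..<k}" by simp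
    qed
    show "{..<k} \<subseteq> {i. 0 < \<beta> i \<and> \<beta> i = \<beta> 0}"
    proof
      fix i assume "i \<in> {..<k}"
      then have "\<beta> i = \<beta> 0" using assms(2)[of i] by simp
      then show "i \<in> {i. 0 < \<beta> i \<and> \<beta> i = \<beta> 0}" using \<open>\<beta> 0 > 0\<close> by simp
    qed
  qed
  then show ?thesis unfolding mult_def by simp
qed

lemma mult_E: assumes "partition \<alpha>" "0 < \<alpha> 0" "0 < c" "c \<le> mult \<alpha>"
  shows "mult (padd \<alpha> (rect 1 c)) = c"
proof (rule mult_char[OF assms(3)])
  fix i assume "i < c"
  then have "i < mult \<alpha>" using assms(4) by simp
  then have "\<alpha> i = \<alpha> 0" using mult_top[OF assms(1,2)] by simp
  then show "padd \<alpha> (rect 1 c) i = padd \<alpha> (rect 1 c) 0" using \<open>i < c\<close> assms(3) by (simp add: padd_def rect_def)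
next
  fix i assume "c \<le> i"
  have "\<alpha> i \<le> \<alpha> 0" using part_dec[OF assms(1)] by simp
  then show "padd \<alpha> (rect 1 c) i < padd \<alpha> (rect 1 c) 0" using \<open>c \<le> i\<close> assms(3) by (simp add: padd_def rect_def)
qed

lemma mult_M: assumes "partition \<alpha>" "0 < \<alpha> 0"
  shows "mult (padd \<alpha> (rect w (mult \<alpha>))) = mult \<alpha>"
proof (rule mult_char[OF mult_pos[OF assms]])
  fix i assume "i < mult \<alpha>"
  then have "\<alpha> i = \<alpha> 0" using mult_top[OF assms(1,2)] by simp
  then show "padd \<alpha> (rect w (mult \<alpha>)) i = padd \<alpha> (rect w (mult \<alpha>)) 0"
    using \<open>i < mult \<alpha>\<close> mult_pos[OF assms] by (simp add: padd_def rect_def)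
next
  fix i assume "mult \<alpha> \<le> i"
  then have "\<alpha> i < \<alpha> 0" using mult_below[OF assms] by simp
  then show "padd \<alpha> (rect w (mult \<alpha>)) i < padd \<alpha> (rect w (mult \<alpha>)) 0"
    using \<open>mult \<alpha> \<le> i\<close> mult_pos[OF assms] by (simp add: padd_def rect_def)
qed

lemma mult_N: assumes "partition \<alpha>" "0 < \<alpha> 0" "0 < c" "c < mult \<alpha>"
  shows "mult (padd (padd \<alpha> (rect w (mult \<alpha>))) (rect 1 c)) = c"
proof (rule mult_char[OF assms(3)])
  fix i assume "i < c"
  then have "i < mult \<alpha>" using assms(4) by simp
  then have "\<alpha> i = \<alpha> 0" using mult_top[OF assms(1,2)] by simp
  then show "padd (padd \<alpha> (rect w (mult \<alpha>))) (rect 1 c) i = padd (padd \<alpha> (rect w (mult \<alpha>))) (rect 1 c) 0"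
    using \<open>i < c\<close> assms(3,4) by (simp add: padd_def rect_def)
next
  fix i assume "c \<le> i"
  show "padd (padd \<alpha> (rect w (mult \<alpha>))) (rect 1 c) i < padd (padd \<alpha> (rect w (mult \<alpha>))) (rect 1 c) 0"
  proof (cases "i < mult \<alpha>")
    case True
    then have "\<alpha> i = \<alpha> 0" using mult_top[OF assms(1,2)] by simp
    then show ?thesis using True \<open>c \<le> i\<close> assms(3,4) by (simp add: padd_def rect_def)
  next
    case False
    then have "\<alpha> i < \<alpha> 0" using mult_below[OF assms(1,2)] by simp
    then show ?thesis using False \<open>c \<le> i\<close> assms(3,4) by (simp add: padd_def rect_def)
  qed
qed



lemma Q_part: "\<alpha> \<in> Q \<tau> \<mu> \<Longrightarrow> partition \<alpha>"
  unfolding Q_def by simp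

lemma Q_pos: assumes "\<alpha> \<in> Q \<tau> \<mu>" shows "0 < \<alpha> 0"
proof -
  have "partition \<alpha>" "0 < weight \<alpha>" using assms unfolding Q_def by simp_all
  then show ?thesis using weight_pos_iff by simp
qed

lemma contains_rect11: assumes "partition \<alpha>" "0 < \<alpha> 0" shows "contains \<alpha> (rect 1 1)"
proof -
  obtain N where N: "\<forall>i\<ge>N. \<alpha> i = 0" using part_bound[OF assms(1)] by blast
  define f where "f a = (if a = 0 then 0 else N + a)" for a :: nat
  have sm: "strict_mono f" unfolding strict_mono_def f_def by simp
  have "rect 1 1 a = card {c\<in>{0::nat}. c < \<alpha> (f a)}" for a
  proof (cases "a = 0")
    case True
    then have "{c\<in>{0::nat}. c < \<alpha> (f a)} = {0}" using assms(2) by (auto simp: f_def)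
    then show ?thesis using True by (simp add: rect_def)
  next
    case False
    then have "\<alpha> (f a) = 0" using N by (simp add: f_def)
    then have "{c\<in>{0::nat}. c < \<alpha> (f a)} = {}" by auto
    then show ?thesis using False by (simp add: rect_def)
  qed
  then show ?thesis unfolding contains_def using sm by blast
qed

lemma S_empty: assumes "partition \<mu>" "\<mu> 0 = 0" shows "Q \<mu> (padd \<mu> (rect 1 1)) = {}"
proof -
  have "\<mu> i = 0" for i using part_dec[OF assms(1), of 0 i] assms(2) by simp
  then have e: "padd \<mu> (rect 1 1) = rect 1 1" by (simp add: padd_def fun_eq_iff)
  show ?thesis
  proof (rule ccontr)
    assume "Q \<mu> (padd \<mu> (rect 1 1)) \<noteq> {}"
    then obtain \<alpha> where a: "\<alpha> \<in> Q \<mu> (padd \<mu> (rect 1 1))" by blast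
    then have "contains \<alpha> (rect 1 1)" using contains_rect11 Q_part Q_pos by blast
    then show False using a e unfolding Q_def by simp
  qed
qed

lemma card_less_mono: assumes "card {c\<in>C. c < (x::nat)} < card {c\<in>C. c < y}" shows "x < y"
proof (rule ccontr)
  assume "\<not> x < y"
  then have "{c\<in>C. c < y} \<subseteq> {c\<in>C. c < x}" by auto
  moreover have "finite {c\<in>C. c < x}" by simp
  ultimately have "card {c\<in>C. c < y} \<le> card {c\<in>C. c < x}" by (rule card_mono[rotated])
  then show False using assms by simp
qed

lemma contains_M:
  assumes mu: "strict_partition \<mu>" "0 < \<mu> 0"
    and al: "partition \<alpha>" "0 < \<alpha> 0" "contains \<alpha> \<mu>" and w: "0 < w"
  shows "contains (padd \<alpha> (rect w (mult \<alpha>))) (padd \<mu> (rect 1 1))"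
proof -
  obtain f C where sm: "strict_mono f" and fc: "\<And>a. \<mu> a = card {c\<in>C. c < \<alpha> (f a)}"
    using al(3) unfolding contains_def by blast
  have pmu: "partition \<mu>" using mu(1) unfolding strict_partition_def by simp
  have "\<mu> 1 \<noteq> \<mu> 0" using mu unfolding strict_partition_def by (metis zero_neq_one)
  moreover have "\<mu> 1 \<le> \<mu> 0" using part_dec[OF pmu] by simp
  ultimately have "\<mu> 1 < \<mu> 0" by simp
  then have f10: "\<alpha> (f 1) < \<alpha> (f 0)" using fc[of 0] fc[of 1] card_less_mono by metis
  define m where "m = mult \<alpha>"
  define \<beta> where "\<beta> = padd \<alpha> (rect w m)"
  have a0: "\<alpha> (f 0) \<le> \<alpha> 0" using part_dec[OF al(1)] by simp
  have fa: "\<alpha> (f a) < \<alpha> (f 0)" if "0 < a" for a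
  proof -
    have "f 1 \<le> f a" using that sm by (simp add: strict_mono_less_eq)
    then have "\<alpha> (f a) \<le> \<alpha> (f 1)" using part_dec[OF al(1)] by simp
    then show ?thesis using f10 by simp
  qed
  have ba: "\<beta> (f a) = \<alpha> (f a)" if "0 < a" for a
  proof -
    have "\<alpha> (f a) \<noteq> \<alpha> 0" using fa[OF that] a0 by simp
    then have "\<not> f a < m" using mult_top[OF al(1,2)] m_def by simp
    then show ?thesis by (simp add: \<beta>_def padd_def rect_def)
  qed
  have b0: "\<beta> 0 = \<alpha> 0 + w" using mult_pos[OF al(1,2)] m_def by (simp add: \<beta>_def padd_def rect_def)
  define f' where "f' a = (if a = 0 then 0 else f a)" for a
  have sm': "strict_mono f'"
    unfolding strict_mono_def
  proof (intro allI impI)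
    fix x y :: nat assume "x < y"
    then have "f x < f y" using sm by (simp add: strict_mono_def)
    then show "f' x < f' y" using \<open>x < y\<close> by (simp add: f'_def)
  qed
  define C' where "C' = {c\<in>C. c < \<alpha> (f 0)} \<union> {\<alpha> 0 + w - 1}"
  have "padd \<mu> (rect 1 1) a = card {c\<in>C'. c < \<beta> (f' a)}" for a
  proof (cases "a = 0")
    case True
    have "{c\<in>C'. c < \<beta> (f' a)} = insert (\<alpha> 0 + w - 1) {c\<in>C. c < \<alpha> (f 0)}"
      using True b0 a0 w by (auto simp: C'_def f'_def)
    moreover have "\<alpha> 0 + w - 1 \<notin> {c\<in>C. c < \<alpha> (f 0)}" using a0 w by auto
    ultimately have "card {c\<in>C'. c < \<beta> (f' a)} = Suc (card {c\<in>C. c < \<alpha> (f 0)})" by simp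
    then show ?thesis using True fc[of 0] by (simp add: padd_def rect_def)
  next
    case False
    then have "{c\<in>C'. c < \<beta> (f' a)} = {c\<in>C. c < \<alpha> (f a)}"
      using ba[of a] fa[of a] a0 by (auto simp: C'_def f'_def)
    then show ?thesis using False fc[of a] by (simp add: padd_def rect_def)
  qed
  then show ?thesis unfolding contains_def \<beta>_def m_def using sm' by blast
qed

lemma M_notin:
  assumes mu: "strict_partition \<mu>" "0 < \<mu> 0" and a: "\<alpha> \<in> Q \<mu> (padd \<mu> (rect 1 1))" and w: "0 < w"
  shows "padd \<alpha> (rect w (mult \<alpha>)) \<notin> Q \<mu> (padd \<mu> (rect 1 1))"
proof -
  have "contains \<alpha> \<mu>" using a unfolding Q_def by simp
  then have "contains (padd \<alpha> (rect w (mult \<alpha>))) (padd \<mu> (rect 1 1))"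
    using contains_M[OF mu Q_part[OF a] Q_pos[OF a] _ w] by simp
  then show ?thesis unfolding Q_def by simp
qed



definition good :: "(nat \<Rightarrow> nat) set \<Rightarrow> bool" where
  "good S \<longleftrightarrow> (\<forall>\<alpha>\<in>S. partition \<alpha> \<and> 0 < \<alpha> 0)"

definition mgood :: "(nat \<Rightarrow> nat) set \<Rightarrow> bool" where
  "mgood S \<longleftrightarrow> (\<forall>\<alpha>\<in>S. \<forall>w>0. padd \<alpha> (rect w (mult \<alpha>)) \<notin> S)"

lemma padd_cancel: "padd \<alpha> \<gamma> = padd \<alpha>' \<gamma> \<Longrightarrow> \<alpha> = \<alpha>'"
  unfolding padd_def fun_eq_iff by simp

definition emap where "emap = (\<lambda>(\<alpha>, c). padd \<alpha> (rect 1 c))"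
definition mmap where "mmap = (\<lambda>(\<alpha>, w). padd \<alpha> (rect w (mult \<alpha>)))"
definition nmap where "nmap = (\<lambda>(\<alpha>, (w, c)). padd (padd \<alpha> (rect w (mult \<alpha>))) (rect 1 c))"

lemma ES_image: "ES S = emap ` Sigma S (\<lambda>\<alpha>. {1..mult \<alpha>})"
proof
  show "ES S \<subseteq> emap ` Sigma S (\<lambda>\<alpha>. {1..mult \<alpha>})"
  proof
    fix \<beta> assume "\<beta> \<in> ES S"
    then obtain \<alpha> c where "\<alpha> \<in> S" "0 < c" "c \<le> mult \<alpha>" "\<beta> = padd \<alpha> (rect 1 c)"
      unfolding ES_def Eset_def by blast
    then have "(\<alpha>, c) \<in> Sigma S (\<lambda>\<alpha>. {1..mult \<alpha>})" "\<beta> = emap (\<alpha>, c)" by (auto simp: emap_def)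
    then show "\<beta> \<in> emap ` Sigma S (\<lambda>\<alpha>. {1..mult \<alpha>})" by (rule rev_image_eqI)
  qed
  show "emap ` Sigma S (\<lambda>\<alpha>. {1..mult \<alpha>}) \<subseteq> ES S"
  proof
    fix \<beta> assume "\<beta> \<in> emap ` Sigma S (\<lambda>\<alpha>. {1..mult \<alpha>})"
    then obtain \<alpha> c where "\<alpha> \<in> S" "c \<in> {1..mult \<alpha>}" "\<beta> = padd \<alpha> (rect 1 c)" by (auto simp: emap_def)
    then have "\<beta> \<in> Eset \<alpha>" unfolding Eset_def by auto
    then show "\<beta> \<in> ES S" unfolding ES_def using \<open>\<alpha> \<in> S\<close> by blast
  qed
qed

lemma MS_image: "MS S = mmap ` (S \<times> UNIV)"
proof
  show "MS S \<subseteq> mmap ` (S \<times> UNIV)"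
  proof
    fix \<beta> assume "\<beta> \<in> MS S"
    then obtain \<alpha> w where "\<alpha> \<in> S" "\<beta> = padd \<alpha> (rect w (mult \<alpha>))"
      unfolding MS_def Mset_def by blast
    then have "(\<alpha>, w) \<in> S \<times> UNIV" "\<beta> = mmap (\<alpha>, w)" by (auto simp: mmap_def)
    then show "\<beta> \<in> mmap ` (S \<times> UNIV)" by (rule rev_image_eqI)
  qed
  show "mmap ` (S \<times> UNIV) \<subseteq> MS S"
  proof
    fix \<beta> assume "\<beta> \<in> mmap ` (S \<times> UNIV)"
    then obtain \<alpha> w where "\<alpha> \<in> S" "\<beta> = padd \<alpha> (rect w (mult \<alpha>))" by (auto simp: mmap_def)
    then have "\<beta> \<in> Mset \<alpha>" unfolding Mset_def by auto
    then show "\<beta> \<in> MS S" unfolding MS_def using \<open>\<alpha> \<in> S\<close> by blast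
  qed
qed

lemma NS_image: "NS S = nmap ` Sigma S (\<lambda>\<alpha>. UNIV \<times> {1..<mult \<alpha>})"
proof
  show "NS S \<subseteq> nmap ` Sigma S (\<lambda>\<alpha>. UNIV \<times> {1..<mult \<alpha>})"
  proof
    fix \<beta> assume "\<beta> \<in> NS S"
    then obtain \<alpha> w c where "\<alpha> \<in> S" "0 < c" "c < mult \<alpha>" "\<beta> = padd (padd \<alpha> (rect w (mult \<alpha>))) (rect 1 c)"
      unfolding NS_def Nset_def by blast
    then have "(\<alpha>, (w, c)) \<in> Sigma S (\<lambda>\<alpha>. UNIV \<times> {1..<mult \<alpha>})" "\<beta> = nmap (\<alpha>, (w, c))" by (auto simp: nmap_def)
    then show "\<beta> \<in> nmap ` Sigma S (\<lambda>\<alpha>. UNIV \<times> {1..<mult \<alpha>})" by (rule rev_image_eqI)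
  qed
  show "nmap ` Sigma S (\<lambda>\<alpha>. UNIV \<times> {1..<mult \<alpha>}) \<subseteq> NS S"
  proof
    fix \<beta> assume "\<beta> \<in> nmap ` Sigma S (\<lambda>\<alpha>. UNIV \<times> {1..<mult \<alpha>})"
    then obtain \<alpha> w c where "\<alpha> \<in> S" "c \<in> {1..<mult \<alpha>}" "\<beta> = padd (padd \<alpha> (rect w (mult \<alpha>))) (rect 1 c)"
      by (auto simp: nmap_def)
    then have "0 < c" "c < mult \<alpha>" by auto
    then have "\<beta> \<in> Nset \<alpha>" unfolding Nset_def using \<open>\<beta> = _\<close> by blast
    then show "\<beta> \<in> NS S" unfolding NS_def using \<open>\<alpha> \<in> S\<close> by blast
  qed
qed

lemma emap_inj: assumes "good S" shows "inj_on emap (Sigma S (\<lambda>\<alpha>. {1..mult \<alpha>}))"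
proof (rule inj_onI)
  fix x y assume x: "x \<in> Sigma S (\<lambda>\<alpha>. {1..mult \<alpha>})" and y: "y \<in> Sigma S (\<lambda>\<alpha>. {1..mult \<alpha>})"
    and e: "emap x = emap y"
  obtain \<alpha> c where xa: "x = (\<alpha>, c)" by fastforce
  obtain \<alpha>' c' where ya: "y = (\<alpha>', c')" by fastforce
  have "partition \<alpha>" "0 < \<alpha> 0" "0 < c" "c \<le> mult \<alpha>" using x xa assms unfolding good_def by auto
  then have m1: "mult (padd \<alpha> (rect 1 c)) = c" by (rule mult_E)
  have "partition \<alpha>'" "0 < \<alpha>' 0" "0 < c'" "c' \<le> mult \<alpha>'" using y ya assms unfolding good_def by auto
  then have m2: "mult (padd \<alpha>' (rect 1 c')) = c'" by (rule mult_E)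
  have eq: "padd \<alpha> (rect 1 c) = padd \<alpha>' (rect 1 c')" using e xa ya by (simp add: emap_def)
  then have "c = c'" using m1 m2 by simp
  then have "\<alpha> = \<alpha>'" using eq padd_cancel by simp
  then show "x = y" using xa ya \<open>c = c'\<close> by simp
qed

lemma mmap_eq:
  assumes g: "good S" "mgood S" and a: "\<alpha> \<in> S" "\<alpha>' \<in> S"
    and e: "padd \<alpha> (rect w (mult \<alpha>)) = padd \<alpha>' (rect w' (mult \<alpha>'))"
  shows "\<alpha> = \<alpha>' \<and> w = w'"
proof -
  have pa: "partition \<alpha>" "0 < \<alpha> 0" "partition \<alpha>'" "0 < \<alpha>' 0" using g(1) a unfolding good_def by auto
  have "mult \<alpha> = mult \<alpha>'" using mult_M[OF pa(1,2), of w] mult_M[OF pa(3,4), of w'] e by simp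
  define m where "m = mult \<alpha>"
  have mm: "mult \<alpha>' = m" using \<open>mult \<alpha> = mult \<alpha>'\<close> m_def by simp
  have pt: "\<alpha> i + (if i < m then w else 0) = \<alpha>' i + (if i < m then w' else 0)" for i
    using fun_cong[OF e, of i] mm m_def by (simp add: padd_def rect_def)
  have m0: "0 < m" using mult_pos[OF pa(1,2)] m_def by simp
  show ?thesis
  proof (cases w w' rule: linorder_cases)
    case less
    have "\<alpha> i = padd \<alpha>' (rect (w' - w) (mult \<alpha>')) i" for i
    proof (cases "i < m")
      case True then show ?thesis using pt[of i] less mm by (simp add: padd_def rect_def)
    next
      case False then show ?thesis using pt[of i] less mm by (simp add: padd_def rect_def)
    qed
    then have "\<alpha> = padd \<alpha>' (rect (w' - w) (mult \<alpha>'))" by (rule ext)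
    then have "padd \<alpha>' (rect (w' - w) (mult \<alpha>')) \<in> S" using a(1) by simp
    then show ?thesis using g(2) a(2) less unfolding mgood_def by simp
  next
    case equal
    have "\<alpha> i = \<alpha>' i" for i using pt[of i] equal by (cases "i < m") simp_all
    then have "\<alpha> = \<alpha>'" by (rule ext)
    then show ?thesis using equal by simp
  next
    case greater
    have "\<alpha>' i = padd \<alpha> (rect (w - w') (mult \<alpha>)) i" for i
    proof (cases "i < m")
      case True then show ?thesis using pt[of i] greater m_def by (simp add: padd_def rect_def)
    next
      case False then show ?thesis using pt[of i] greater m_def by (simp add: padd_def rect_def)
    qed
    then have "\<alpha>' = padd \<alpha> (rect (w - w') (mult \<alpha>))" by (rule ext)
    then have "padd \<alpha> (rect (w - w') (mult \<alpha>)) \<in> S" using a(2) by simp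
    then show ?thesis using g(2) a(1) greater unfolding mgood_def by simp
  qed
qed

lemma mmap_inj: assumes "good S" "mgood S" shows "inj_on mmap (S \<times> UNIV)"
proof (rule inj_onI)
  fix x y assume x: "x \<in> S \<times> UNIV" and y: "y \<in> S \<times> UNIV" and e: "mmap x = mmap y"
  obtain \<alpha> w where xa: "x = (\<alpha>, w)" by fastforce
  obtain \<alpha>' w' where ya: "y = (\<alpha>', w')" by fastforce
  have "\<alpha> = \<alpha>' \<and> w = w'"
    by (rule mmap_eq[OF assms]) (use x y xa ya e in \<open>simp_all add: mmap_def\<close>)
  then show "x = y" using xa ya by simp
qed

lemma nmap_inj: assumes "good S" "mgood S" shows "inj_on nmap (Sigma S (\<lambda>\<alpha>. UNIV \<times> {1..<mult \<alpha>}))"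
proof (rule inj_onI)
  fix x y assume x: "x \<in> Sigma S (\<lambda>\<alpha>. UNIV \<times> {1..<mult \<alpha>})" and y: "y \<in> Sigma S (\<lambda>\<alpha>. UNIV \<times> {1..<mult \<alpha>})"
    and e: "nmap x = nmap y"
  obtain \<alpha> w c where xa: "x = (\<alpha>, (w, c))" by (metis prod.exhaust)
  obtain \<alpha>' w' c' where ya: "y = (\<alpha>', (w', c'))" by (metis prod.exhaust)
  have a: "\<alpha> \<in> S" "0 < c" "c < mult \<alpha>" using x xa by auto
  have a': "\<alpha>' \<in> S" "0 < c'" "c' < mult \<alpha>'" using y ya by auto
  have "partition \<alpha>" "0 < \<alpha> 0" using assms(1) a(1) unfolding good_def by auto
  then have m1: "mult (padd (padd \<alpha> (rect w (mult \<alpha>))) (rect 1 c)) = c" using mult_N a by simp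
  have "partition \<alpha>'" "0 < \<alpha>' 0" using assms(1) a'(1) unfolding good_def by auto
  then have m2: "mult (padd (padd \<alpha>' (rect w' (mult \<alpha>'))) (rect 1 c')) = c'" using mult_N a' by simp
  have eq: "padd (padd \<alpha> (rect w (mult \<alpha>))) (rect 1 c) = padd (padd \<alpha>' (rect w' (mult \<alpha>'))) (rect 1 c')"
    using e xa ya by (simp add: nmap_def)
  then have "c = c'" using m1 m2 by simp
  then have "padd \<alpha> (rect w (mult \<alpha>)) = padd \<alpha>' (rect w' (mult \<alpha>'))" using eq padd_cancel by simp
  then have "\<alpha> = \<alpha>' \<and> w = w'" using mmap_eq[OF assms a(1) a'(1)] by simp
  then show "x = y" using xa ya \<open>c = c'\<close> by simp
qed




lemma sum_diff_identity2:
  assumes "\<And>i. \<alpha> (Suc i) \<le> \<alpha> i"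
  shows "sum \<alpha> {..<n} = (\<Sum>i<n. Suc i * (\<alpha> i - \<alpha> (Suc i))) + n * \<alpha> n"
proof (induction n)
  case 0 then show ?case by simp
next
  case (Suc n)
  have le: "\<alpha> (Suc n) \<le> \<alpha> n" using assms by simp
  have "sum \<alpha> {..<Suc n} = sum \<alpha> {..<n} + \<alpha> n" by simp
  also have "\<dots> = (\<Sum>i<n. Suc i * (\<alpha> i - \<alpha> (Suc i))) + n * \<alpha> n + \<alpha> n" using Suc.IH by simp
  also have "\<dots> = (\<Sum>i<n. Suc i * (\<alpha> i - \<alpha> (Suc i))) + Suc n * (\<alpha> n - \<alpha> (Suc n)) + Suc n * \<alpha> (Suc n)"
  proof -
    have "n * \<alpha> n + \<alpha> n = Suc n * (\<alpha> n - \<alpha> (Suc n)) + Suc n * \<alpha> (Suc n)"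
    proof -
      have "Suc n * (\<alpha> n - \<alpha> (Suc n)) + Suc n * \<alpha> (Suc n) = Suc n * (\<alpha> n - \<alpha> (Suc n) + \<alpha> (Suc n))"
        by (simp add: add_mult_distrib2)
      also have "\<alpha> n - \<alpha> (Suc n) + \<alpha> (Suc n) = \<alpha> n" using le by simp
      finally show ?thesis by simp
    qed
    then show ?thesis by simp
  qed
  also have "\<dots> = (\<Sum>i<Suc n. Suc i * (\<alpha> i - \<alpha> (Suc i))) + Suc n * \<alpha> (Suc n)" by simp
  finally show ?case .
qed

definition dif :: "(nat \<Rightarrow> nat) \<Rightarrow> nat \<Rightarrow> nat" where
  "dif \<alpha> i = \<alpha> i - \<alpha> (Suc i)"

lemma weight_dif: assumes "partition \<alpha>" "\<And>i. i \<ge> N \<Longrightarrow> \<alpha> i = 0"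
  shows "weight \<alpha> = (\<Sum>i<N. Suc i * dif \<alpha> i)"
proof -
  have d: "\<And>i. \<alpha> (Suc i) \<le> \<alpha> i" using assms(1) unfolding partition_def by simp
  have "weight \<alpha> = sum \<alpha> {..<N}" using weight_eq_sum assms(2) by blast
  also have "\<dots> = (\<Sum>i<N. Suc i * (\<alpha> i - \<alpha> (Suc i))) + N * \<alpha> N" by (rule sum_diff_identity2) (rule d)
  finally show ?thesis using assms(2)[of N] unfolding dif_def by simp
qed

lemma dif_inj: assumes "partition \<alpha>" "partition \<beta>" "\<And>i. i \<ge> N \<Longrightarrow> \<alpha> i = 0" "\<And>i. i \<ge> N \<Longrightarrow> \<beta> i = 0"
  "\<And>i. i < N \<Longrightarrow> dif \<alpha> i = dif \<beta> i"
  shows "\<alpha> = \<beta>"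
proof
  fix i
  show "\<alpha> i = \<beta> i"
  proof (cases "i \<le> N")
    case True
    then show ?thesis
    proof (induction rule: inc_induct)
      case base then show ?case using assms(3,4) by simp
    next
      case (step n)
      have "\<alpha> (Suc n) \<le> \<alpha> n" "\<beta> (Suc n) \<le> \<beta> n" using assms(1,2) unfolding partition_def by simp_all
      then show ?case using assms(5)[OF step(2)] step(3) unfolding dif_def by simp
    qed
  next
    case False then show ?thesis using assms(3,4) by simp
  qed
qed

lemma geo_factor_bound:
  fixes x r :: real
  assumes "0 \<le> x" "x \<le> r" "r < 1"
  shows "(\<Sum>k\<le>M. x ^ k) \<le> exp (x / (1 - r))"
proof -
  have x1: "x < 1" using assms by simp
  have "(\<Sum>k\<le>M. x ^ k) = (\<Sum>k<Suc M. x ^ k)" by (simp add: lessThan_Suc_atMost)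
  also have "\<dots> = (1 - x ^ Suc M) / (1 - x)" using sum_gp_strict[of x "Suc M"] x1 by simp
  also have "\<dots> \<le> 1 / (1 - x)" using x1 assms(1) by (intro divide_right_mono) auto
  also have "1 / (1 - x) = 1 + x / (1 - x)" using x1 by (simp add: field_simps)
  also have "x / (1 - x) \<le> x / (1 - r)" using assms x1 by (intro divide_left_mono) auto
  also have "1 + x / (1 - r) \<le> exp (x / (1 - r))" by (rule exp_ge_add_one_self)
  finally show ?thesis by simp
qed

lemma part_sum_bound:
  fixes r :: real
  assumes r: "0 \<le> r" "r < 1" and Fs: "finite Fs" "Fs \<subseteq> {\<alpha>. partition \<alpha>}"
  shows "(\<Sum>\<alpha>\<in>Fs. r ^ weight \<alpha>) \<le> exp (1 / (1 - r) ^ 2)"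
proof -
  define N where "N = sum weight Fs"
  have wN: "weight \<alpha> \<le> N" if "\<alpha> \<in> Fs" for \<alpha> unfolding N_def by (rule member_le_sum) (use that Fs(1) in auto)
  have zN: "\<alpha> i = 0" if "\<alpha> \<in> Fs" "i \<ge> N" for \<alpha> i
    using part_zero_beyond_weight[of \<alpha> i] Fs(2) that wN[OF that(1)] by auto
  define \<phi> where "\<phi> \<alpha> = restrict (dif \<alpha>) {..<N}" for \<alpha>
  define g where "g e = (\<Prod>i<N. (r ^ Suc i) ^ e i)" for e :: "nat \<Rightarrow> nat"
  have inj: "inj_on \<phi> Fs"
  proof (rule inj_onI)
    fix \<alpha> \<beta> assume a: "\<alpha> \<in> Fs" "\<beta> \<in> Fs" "\<phi> \<alpha> = \<phi> \<beta>"
    have "dif \<alpha> i = dif \<beta> i" if "i < N" for i using fun_cong[OF a(3), of i] that by (simp add: \<phi>_def)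
    then show "\<alpha> = \<beta>" using dif_inj[of \<alpha> \<beta> N] a(1,2) Fs(2) zN by blast
  qed
  have rw: "r ^ weight \<alpha> = g (\<phi> \<alpha>)" if "\<alpha> \<in> Fs" for \<alpha>
  proof -
    have "weight \<alpha> = (\<Sum>i<N. Suc i * dif \<alpha> i)" using weight_dif[of \<alpha> N] Fs(2) zN[OF that] that by blast
    then have "r ^ weight \<alpha> = (\<Prod>i<N. r ^ (Suc i * dif \<alpha> i))" by (simp add: power_sum)
    also have "\<dots> = g (\<phi> \<alpha>)" unfolding g_def
    proof (rule prod.cong)
      fix i assume "i \<in> {..<N}"
      then show "r ^ (Suc i * dif \<alpha> i) = (r ^ Suc i) ^ (\<phi> \<alpha> i)"
        by (subst power_mult) (simp add: \<phi>_def)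
    qed simp
    finally show ?thesis .
  qed
  have sub: "\<phi> ` Fs \<subseteq> PiE {..<N} (\<lambda>_. {..N})"
  proof
    fix e assume "e \<in> \<phi> ` Fs"
    then obtain \<alpha> where a: "\<alpha> \<in> Fs" "e = \<phi> \<alpha>" by blast
    have "dif \<alpha> i \<le> N" for i
      using part_le_weight[of \<alpha> i] Fs(2) a(1) wN[OF a(1)] unfolding dif_def by auto
    then show "e \<in> PiE {..<N} (\<lambda>_. {..N})" using a(2) by (auto simp: \<phi>_def)
  qed
  have "(\<Sum>\<alpha>\<in>Fs. r ^ weight \<alpha>) = (\<Sum>\<alpha>\<in>Fs. g (\<phi> \<alpha>))" using rw by simp
  also have "\<dots> = sum g (\<phi> ` Fs)" using sum.reindex[OF inj, of g] by simp
  also have "\<dots> \<le> sum g (PiE {..<N} (\<lambda>_. {..N}))"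
    by (rule sum_mono2) (use sub r in \<open>auto simp: g_def finite_PiE intro!: prod_nonneg\<close>)
  also have "\<dots> = (\<Prod>i<N. \<Sum>k\<le>N. (r ^ Suc i) ^ k)" unfolding g_def
    by (rule prod_sum_PiE[symmetric]) auto
  also have "\<dots> \<le> (\<Prod>i<N. exp (r ^ Suc i / (1 - r)))"
  proof (rule prod_mono)
    fix i assume "i \<in> {..<N}"
    have "r ^ Suc i \<le> r" using r by (simp add: power_le_one mult_left_le)
    then show "0 \<le> (\<Sum>k\<le>N. (r ^ Suc i) ^ k) \<and> (\<Sum>k\<le>N. (r ^ Suc i) ^ k) \<le> exp (r ^ Suc i / (1 - r))"
      using geo_factor_bound[of "r ^ Suc i" r N] r by (auto intro!: sum_nonneg)
  qed
  also have "\<dots> = exp (\<Sum>i<N. r ^ Suc i / (1 - r))" by (simp add: exp_sum)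
  also have "\<dots> \<le> exp (1 / (1 - r) ^ 2)"
  proof -
    have "(\<Sum>i<N. r ^ Suc i) \<le> (\<Sum>i<Suc N. r ^ i)"
    proof -
      have "(\<Sum>i<N. r ^ Suc i) \<le> (\<Sum>i<N. r ^ Suc i) + 1" by simp
      also have "\<dots> = (\<Sum>i<Suc N. r ^ i)"
        using sum.lessThan_Suc_shift[of "\<lambda>i. r ^ i" N] by simp
      finally show ?thesis .
    qed
    also have "\<dots> = (1 - r ^ Suc N) / (1 - r)" using sum_gp_strict[of r "Suc N"] r by simp
    also have "\<dots> \<le> 1 / (1 - r)" using r by (intro divide_right_mono) auto
    finally have s: "(\<Sum>i<N. r ^ Suc i) \<le> 1 / (1 - r)" .
    have "(\<Sum>i<N. r ^ Suc i / (1 - r)) = (\<Sum>i<N. r ^ Suc i) / (1 - r)" by (simp add: sum_divide_distrib)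
    also have "\<dots> \<le> (1 / (1 - r)) / (1 - r)" using s r by (intro divide_right_mono) auto
    also have "\<dots> = 1 / (1 - r) ^ 2" by (simp add: power2_eq_square)
    finally show ?thesis by simp
  qed
  finally show ?thesis .
qed

lemma part_summable:
  fixes r :: real
  assumes "0 \<le> r" "r < 1" "A \<subseteq> {\<alpha>. partition \<alpha>}"
  shows "(\<lambda>\<alpha>. r ^ weight \<alpha>) summable_on A"
proof (rule nonneg_bdd_above_summable_on)
  show "\<And>x. x \<in> A \<Longrightarrow> 0 \<le> r ^ weight x" using assms by simp
  show "bdd_above (sum (\<lambda>\<alpha>. r ^ weight \<alpha>) ` {Fs. Fs \<subseteq> A \<and> finite Fs})"
  proof (rule bdd_aboveI)
    fix s assume "s \<in> sum (\<lambda>\<alpha>. r ^ weight \<alpha>) ` {Fs. Fs \<subseteq> A \<and> finite Fs}"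
    then obtain Fs where "Fs \<subseteq> A" "finite Fs" "s = sum (\<lambda>\<alpha>. r ^ weight \<alpha>) Fs" by blast
    then show "s \<le> exp (1 / (1 - r) ^ 2)" using part_sum_bound[of r Fs] assms by auto
  qed
qed



lemma csummable:
  fixes f :: "(nat \<Rightarrow> nat) \<Rightarrow> complex"
  assumes A: "A \<subseteq> {\<alpha>. partition \<alpha>}" and z: "norm z < 1"
    and b: "\<And>\<alpha>. \<alpha> \<in> A \<Longrightarrow> norm (f \<alpha>) \<le> K * norm z ^ weight \<alpha>"
  shows "f summable_on A"
proof -
  have "(\<lambda>\<alpha>. norm z ^ weight \<alpha>) summable_on A" by (rule part_summable) (use A z in auto)
  then have "(\<lambda>\<alpha>. K * norm z ^ weight \<alpha>) summable_on A" by (rule summable_on_cmult_right)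
  then have "(\<lambda>\<alpha>. norm (f \<alpha>)) summable_on A"
    by (rule summable_on_comparison_test) (use b in auto)
  then show ?thesis by (rule abs_summable_summable)
qed

lemma infsum_coeffs:
  fixes h :: "nat \<Rightarrow> nat \<Rightarrow> complex"
  assumes A: "A \<subseteq> {\<alpha>. partition \<alpha>}" and s: "(\<lambda>\<alpha>. h (weight \<alpha>) (mult \<alpha>)) summable_on A"
  shows "infsum (\<lambda>(n, m). of_nat (coeffs A n m) * h n m) UNIV = infsum (\<lambda>\<alpha>. h (weight \<alpha>) (mult \<alpha>)) A"
proof -
  define B where "B p = {\<alpha>\<in>A. weight \<alpha> = fst p \<and> mult \<alpha> = snd p}" for p :: "nat \<times> nat"
  define j where "j \<alpha> = ((weight \<alpha>, mult \<alpha>), \<alpha>)" for \<alpha> :: "nat \<Rightarrow> nat"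
  define H where "H = (\<lambda>(p :: nat \<times> nat, \<alpha> :: nat \<Rightarrow> nat). h (fst p) (snd p))"
  have inj: "inj_on j A" unfolding j_def by (rule inj_onI) simp
  have img: "j ` A = Sigma UNIV B"
  proof
    show "j ` A \<subseteq> Sigma UNIV B" unfolding j_def B_def by auto
    show "Sigma UNIV B \<subseteq> j ` A"
    proof
      fix x assume "x \<in> Sigma UNIV B"
      then obtain p \<alpha> where x: "x = (p, \<alpha>)" "\<alpha> \<in> B p" by blast
      then have "\<alpha> \<in> A" "p = (weight \<alpha>, mult \<alpha>)" unfolding B_def by auto
      then show "x \<in> j ` A" using x(1) unfolding j_def by simp
    qed
  qed
  have Hj: "H \<circ> j = (\<lambda>\<alpha>. h (weight \<alpha>) (mult \<alpha>))" unfolding H_def j_def by (simp add: o_def)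
  have sS: "H summable_on Sigma UNIV B"
    using summable_on_reindex[OF inj, of H] s unfolding img Hj by simp
  have fin: "finite (B p)" for p
  proof -
    have "B p \<subseteq> {\<alpha>. partition \<alpha> \<and> weight \<alpha> = fst p}" unfolding B_def using A by auto
    then show ?thesis using finite_weight by (rule finite_subset)
  qed
  have inner: "infsum (\<lambda>\<alpha>. H (p, \<alpha>)) (B p) = of_nat (coeffs A (fst p) (snd p)) * h (fst p) (snd p)" for p
  proof -
    have "infsum (\<lambda>\<alpha>. H (p, \<alpha>)) (B p) = infsum (\<lambda>_. h (fst p) (snd p)) (B p)" unfolding H_def by simp
    also have "\<dots> = of_nat (card (B p)) * h (fst p) (snd p)" using fin by simp
    also have "card (B p) = coeffs A (fst p) (snd p)" unfolding B_def coeffs_def by simp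
    finally show ?thesis .
  qed
  have "infsum (\<lambda>(n, m). of_nat (coeffs A n m) * h n m) UNIV
      = infsum (\<lambda>p. infsum (\<lambda>\<alpha>. H (p, \<alpha>)) (B p)) UNIV"
    by (rule infsum_cong) (simp add: inner split_def)
  also have "\<dots> = infsum H (Sigma UNIV B)" by (rule infsum_Sigma_banach[OF sS])
  also have "\<dots> = infsum (H \<circ> j) A" unfolding img[symmetric] by (rule infsum_reindex[OF inj])
  finally show ?thesis unfolding Hj .
qed

lemma F_eq:
  assumes A: "A \<subseteq> {\<alpha>. partition \<alpha>}" and z: "norm z < 1" and t: "norm t \<le> 1"
  shows "F A z t = infsum (\<lambda>\<alpha>. z ^ weight \<alpha> * t ^ mult \<alpha>) A"
    and "(\<lambda>\<alpha>. z ^ weight \<alpha> * t ^ mult \<alpha>) summable_on A"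
proof -
  show s: "(\<lambda>\<alpha>. z ^ weight \<alpha> * t ^ mult \<alpha>) summable_on A"
  proof (rule csummable[OF A z, of _ 1])
    fix \<alpha> assume "\<alpha> \<in> A"
    have "norm (t ^ mult \<alpha>) \<le> 1" using t by (simp add: norm_power power_le_one)
    then show "norm (z ^ weight \<alpha> * t ^ mult \<alpha>) \<le> 1 * norm z ^ weight \<alpha>"
      by (simp add: norm_mult norm_power mult_left_le)
  qed
  have "F A z t = infsum (\<lambda>(n, m). of_nat (coeffs A n m) * (z ^ n * t ^ m)) UNIV"
    unfolding F_def gf_def by (simp add: mult.assoc)
  also have "\<dots> = infsum (\<lambda>\<alpha>. z ^ weight \<alpha> * t ^ mult \<alpha>) A"
    by (rule infsum_coeffs[OF A, of "\<lambda>n m. z ^ n * t ^ m"]) (use s in simp)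
  finally show "F A z t = infsum (\<lambda>\<alpha>. z ^ weight \<alpha> * t ^ mult \<alpha>) A" .
qed



lemma good_sub: "good S \<Longrightarrow> S \<subseteq> {\<alpha>. partition \<alpha>}"
  unfolding good_def by auto

lemma geo_shift: "1 + (\<Sum>c\<in>{1..m}. (x::complex) ^ c) = (\<Sum>c<Suc m. x ^ c)"
proof (induction m)
  case 0 then show ?case by simp
next
  case (Suc m)
  have "(\<Sum>c\<in>{1..Suc m}. x ^ c) = (\<Sum>c\<in>{1..m}. x ^ c) + x ^ Suc m" by simp
  then show ?case using Suc.IH by (simp add: add.assoc[symmetric])
qed

lemma E_term:
  fixes z t :: complex
  shows "(z ^ n + (\<Sum>c\<in>{1..m}. z ^ (n + c) * t ^ c)) * (1 - z * t) = z ^ n - z * t * (z ^ n * (z * t) ^ m)"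
proof -
  have "(\<Sum>c\<in>{1..m}. z ^ (n + c) * t ^ c) = z ^ n * (\<Sum>c\<in>{1..m}. (z * t) ^ c)"
    by (simp add: sum_distrib_left power_add power_mult_distrib mult.assoc)
  then have "z ^ n + (\<Sum>c\<in>{1..m}. z ^ (n + c) * t ^ c) = z ^ n * (1 + (\<Sum>c\<in>{1..m}. (z * t) ^ c))"
    by (simp add: distrib_left)
  also have "\<dots> = z ^ n * (\<Sum>c<Suc m. (z * t) ^ c)" by (simp only: geo_shift)
  finally have "(z ^ n + (\<Sum>c\<in>{1..m}. z ^ (n + c) * t ^ c)) * (1 - z * t) = z ^ n * ((1 - z * t) * (\<Sum>c<Suc m. (z * t) ^ c))"
    by (simp add: mult_ac)
  also have "(1 - z * t) * (\<Sum>c<Suc m. (z * t) ^ c) = 1 - (z * t) ^ Suc m" by (rule one_diff_power_eq[symmetric])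
  finally show ?thesis by (simp add: algebra_simps)
qed

lemma ES_sub: assumes "good S" shows "ES S \<subseteq> {\<alpha>. partition \<alpha>}"
proof
  fix \<beta> assume "\<beta> \<in> ES S"
  then obtain \<alpha> c where "\<alpha> \<in> S" "\<beta> = padd \<alpha> (rect 1 c)" unfolding ES_def Eset_def by blast
  then show "\<beta> \<in> {\<alpha>. partition \<alpha>}" using assms part_padd part_rect unfolding good_def by auto
qed

lemma E_identity:
  assumes g: "good S" and z: "norm z < 1" and t: "norm t \<le> 1"
  shows "opE (coeffs S) z t = F S z 1 + F (ES S) z t"
proof -
  have Sp: "S \<subseteq> {\<alpha>. partition \<alpha>}" using g by (rule good_sub)
  have zt: "norm (z * t) < 1"
  proof -
    have "norm (z * t) = norm z * norm t" by (rule norm_mult)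
    also have "\<dots> \<le> norm z" using t by (simp add: mult_left_le)
    finally show ?thesis using z by simp
  qed
  have zt0: "1 - z * t \<noteq> 0" using zt by auto
  define Sig where "Sig = Sigma S (\<lambda>\<alpha>. {1..mult \<alpha>})"
  define inner where "inner \<alpha> = (\<Sum>c\<in>{1..mult \<alpha>}. z ^ (weight \<alpha> + c) * t ^ c)" for \<alpha>
  have A1: "F S z 1 = infsum (\<lambda>\<alpha>. z ^ weight \<alpha>) S" and sA1: "(\<lambda>\<alpha>. z ^ weight \<alpha>) summable_on S"
    using F_eq[OF Sp z, of 1] by simp_all
  have B1: "F S z (z * t) = infsum (\<lambda>\<alpha>. z ^ weight \<alpha> * (z * t) ^ mult \<alpha>) S"
    and sB1: "(\<lambda>\<alpha>. z ^ weight \<alpha> * (z * t) ^ mult \<alpha>) summable_on S"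
    using F_eq[OF Sp z, of "z * t"] zt by simp_all
  have ESp: "ES S \<subseteq> {\<alpha>. partition \<alpha>}" using g by (rule ES_sub)
  have E0: "F (ES S) z t = infsum (\<lambda>\<beta>. z ^ weight \<beta> * t ^ mult \<beta>) (ES S)"
    and sE0: "(\<lambda>\<beta>. z ^ weight \<beta> * t ^ mult \<beta>) summable_on (ES S)"
    using F_eq[OF ESp z t] by simp_all
  have inj: "inj_on emap Sig" unfolding Sig_def using g by (rule emap_inj)
  have comp: "((\<lambda>\<beta>. z ^ weight \<beta> * t ^ mult \<beta>) \<circ> emap) x = (\<lambda>(\<alpha>, c). z ^ (weight \<alpha> + c) * t ^ c) x"
    if "x \<in> Sig" for x
  proof -
    obtain \<alpha> c where x: "x = (\<alpha>, c)" by fastforce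
    have "\<alpha> \<in> S" "1 \<le> c" "c \<le> mult \<alpha>" using that x unfolding Sig_def by auto
    then have pa: "partition \<alpha>" "0 < \<alpha> 0" using g unfolding good_def by auto
    have "weight (padd \<alpha> (rect 1 c)) = weight \<alpha> + c" using weight_padd[OF pa(1) part_rect] weight_rect by simp
    moreover have "mult (padd \<alpha> (rect 1 c)) = c" using mult_E[OF pa] \<open>1 \<le> c\<close> \<open>c \<le> mult \<alpha>\<close> by simp
    ultimately show ?thesis using x by (simp add: emap_def)
  qed
  have sSig: "(\<lambda>(\<alpha>, c). z ^ (weight \<alpha> + c) * t ^ c) summable_on Sig"
  proof -
    have h: "(\<lambda>\<beta>. z ^ weight \<beta> * t ^ mult \<beta>) summable_on (emap ` Sig)"
      unfolding Sig_def ES_image[symmetric] by (rule sE0)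
    have "((\<lambda>\<beta>. z ^ weight \<beta> * t ^ mult \<beta>) \<circ> emap) summable_on Sig"
      using h by (simp only: summable_on_reindex[OF inj])
    then show ?thesis using comp summable_on_cong by (metis (no_types, lifting))
  qed
  have E1: "F (ES S) z t = infsum inner S"
  proof -
    have "F (ES S) z t = infsum (\<lambda>\<beta>. z ^ weight \<beta> * t ^ mult \<beta>) (emap ` Sig)"
      unfolding Sig_def ES_image[symmetric] by (rule E0)
    also have "\<dots> = infsum ((\<lambda>\<beta>. z ^ weight \<beta> * t ^ mult \<beta>) \<circ> emap) Sig"
      by (rule infsum_reindex[OF inj])
    also have "\<dots> = infsum (\<lambda>(\<alpha>, c). z ^ (weight \<alpha> + c) * t ^ c) Sig"
      by (rule infsum_cong) (rule comp)
    also have "\<dots> = infsum (\<lambda>\<alpha>. infsum (\<lambda>c. z ^ (weight \<alpha> + c) * t ^ c) {1..mult \<alpha>}) S"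
      unfolding Sig_def by (rule infsum_Sigma'_banach[symmetric]) (use sSig in \<open>simp add: Sig_def\<close>)
    also have "\<dots> = infsum inner S" unfolding inner_def by simp
    finally show ?thesis .
  qed
  have sinner: "inner summable_on S"
  proof -
    have "(\<lambda>\<alpha>. infsum (\<lambda>c. z ^ (weight \<alpha> + c) * t ^ c) {1..mult \<alpha>}) summable_on S"
      by (rule summable_on_Sigma_banach) (use sSig in \<open>simp add: Sig_def\<close>)
    then show ?thesis unfolding inner_def by simp
  qed
  have "(F S z 1 + F (ES S) z t) * (1 - z * t) = infsum (\<lambda>\<alpha>. (z ^ weight \<alpha> + inner \<alpha>) * (1 - z * t)) S"
    unfolding A1 E1 by (simp add: infsum_cmult_left' infsum_add[OF sA1 sinner])
  also have "\<dots> = infsum (\<lambda>\<alpha>. z ^ weight \<alpha> + - (z * t * (z ^ weight \<alpha> * (z * t) ^ mult \<alpha>))) S"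
    by (rule infsum_cong) (unfold inner_def, subst E_term, simp)
  also have "\<dots> = F S z 1 - z * t * F S z (z * t)"
  proof -
    have s2: "(\<lambda>\<alpha>. - (z * t * (z ^ weight \<alpha> * (z * t) ^ mult \<alpha>))) summable_on S"
      using sB1 by (simp add: summable_on_uminus summable_on_cmult_right)
    show ?thesis unfolding A1 B1 infsum_add[OF sA1 s2] infsum_uminus infsum_cmult_right' by simp
  qed
  finally have key: "(F S z 1 + F (ES S) z t) * (1 - z * t) = F S z 1 - z * t * F S z (z * t)" .
  have "opE (coeffs S) z t = (F S z 1 - z * t * F S z (z * t)) / (1 - z * t)"
    unfolding opE_def F_def ..
  also have "\<dots> = F S z 1 + F (ES S) z t" using key zt0 by (simp add: field_simps)
  finally show ?thesis .
qed



lemma geo_infsum: assumes "norm (x::complex) < 1" shows "infsum (\<lambda>w. x ^ w) UNIV = 1 / (1 - x)"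
proof -
  have "summable (\<lambda>n. norm (x ^ n))" using assms by (simp add: norm_power summable_geometric)
  moreover have "(\<lambda>n. x ^ n) sums (1 / (1 - x))" using geometric_sums[OF assms] by simp
  ultimately have "((\<lambda>n. x ^ n) has_sum (1 / (1 - x))) UNIV" by (rule norm_summable_imp_has_sum)
  then show ?thesis by (rule infsumI)
qed

lemma norm_geo_le: assumes "norm (x::complex) \<le> r" "r < 1" shows "norm (\<Sum>c<m. x ^ c) \<le> 1 / (1 - r)"
proof -
  have r0: "0 \<le> r" using assms(1) norm_ge_zero order_trans by blast
  have "norm (\<Sum>c<m. x ^ c) \<le> (\<Sum>c<m. norm (x ^ c))" by (rule norm_sum)
  also have "\<dots> \<le> (\<Sum>c<m. r ^ c)" by (rule sum_mono) (use assms in \<open>simp add: norm_power power_mono\<close>)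
  also have "\<dots> = (1 - r ^ m) / (1 - r)" using sum_gp_strict[of r m] assms by simp
  also have "\<dots> \<le> 1 / (1 - r)" using assms r0 by (intro divide_right_mono) auto
  finally show ?thesis .
qed

lemma h_bound:
  fixes z t :: complex
  assumes z: "norm z < 1" and t: "norm t \<le> 1" and m: "1 \<le> m"
  shows "norm ((1 / (1 - z ^ m)) * ((1 - (t * z) ^ m) / (1 - t * z)) * z ^ n) \<le> (1 / (1 - norm z)) ^ 2 * norm z ^ n"
proof -
  define r where "r = norm z"
  have r: "0 \<le> r" "r < 1" using z r_def by auto
  have tz: "norm (t * z) \<le> r" unfolding r_def norm_mult using mult_left_le_one_le[of "norm z" "norm t"] t by simp
  have tz1: "t * z \<noteq> 1" using tz r by auto
  have "(1 - (t * z) ^ m) / (1 - t * z) = (\<Sum>c<m. (t * z) ^ c)" using sum_gp_strict[of "t * z" m] tz1 by simp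
  then have b1: "norm ((1 - (t * z) ^ m) / (1 - t * z)) \<le> 1 / (1 - r)" using norm_geo_le[OF tz r(2)] by simp
  have "norm (z ^ m) \<le> r" unfolding r_def norm_power using m z by (simp add: power_le_one_iff power_decreasing[of 1 m "norm z", simplified])
  then have "1 - r \<le> norm (1 - z ^ m)" using norm_triangle_ineq2[of 1 "z ^ m"] by simp
  then have b2: "norm (1 / (1 - z ^ m)) \<le> 1 / (1 - r)" using r by (simp add: norm_divide frac_le)
  have "norm ((1 / (1 - z ^ m)) * ((1 - (t * z) ^ m) / (1 - t * z)) * z ^ n)
      = norm (1 / (1 - z ^ m)) * norm ((1 - (t * z) ^ m) / (1 - t * z)) * r ^ n"
    unfolding r_def by (simp only: norm_mult norm_power)
  also have "\<dots> \<le> (1 / (1 - r)) * (1 / (1 - r)) * r ^ n"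
    using b1 b2 r by (intro mult_right_mono mult_mono) auto
  finally show ?thesis unfolding r_def by (simp add: power2_eq_square)
qed

lemma N_term:
  fixes z t :: complex
  assumes z: "norm z < 1" and t: "norm t \<le> 1" and m: "1 \<le> m"
  shows "infsum (\<lambda>w. z ^ (n + w * m)) UNIV + infsum (\<lambda>w. \<Sum>c\<in>{1..<m}. z ^ (n + w * m + c) * t ^ c) UNIV
       = (1 / (1 - z ^ m)) * ((1 - (t * z) ^ m) / (1 - t * z)) * z ^ n"
proof -
  have zm: "norm (z ^ m) < 1" using z m by (simp add: norm_power power_less_one_iff)
  have tz1: "t * z \<noteq> 1"
  proof -
    have "norm (t * z) \<le> norm z" unfolding norm_mult using mult_left_le_one_le[of "norm z" "norm t"] t by simp
    then show ?thesis using z by auto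
  qed
  define G where "G = infsum (\<lambda>w. (z ^ m) ^ w) UNIV"
  have G: "G = 1 / (1 - z ^ m)" unfolding G_def by (rule geo_infsum[OF zm])
  have "infsum (\<lambda>w. z ^ (n + w * m)) UNIV = infsum (\<lambda>w. z ^ n * (z ^ m) ^ w) UNIV"
    by (rule infsum_cong) (subst mult.commute, simp only: power_add power_mult)
  also have "\<dots> = z ^ n * G" unfolding G_def by (rule infsum_cmult_right')
  finally have I1: "infsum (\<lambda>w. z ^ (n + w * m)) UNIV = z ^ n * G" .
  define s where "s = (\<Sum>c\<in>{1..<m}. (z * t) ^ c)"
  have "infsum (\<lambda>w. \<Sum>c\<in>{1..<m}. z ^ (n + w * m + c) * t ^ c) UNIV = infsum (\<lambda>w. (z ^ n * s) * (z ^ m) ^ w) UNIV"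
  proof (rule infsum_cong)
    fix w
    have "(\<Sum>c\<in>{1..<m}. z ^ (n + w * m + c) * t ^ c) = (\<Sum>c\<in>{1..<m}. (z ^ n * (z * t) ^ c) * (z ^ m) ^ w)"
      by (rule sum.cong) (simp_all only: mult.commute[of w m] power_add power_mult power_mult_distrib mult_ac)
    also have "\<dots> = (z ^ n * s) * (z ^ m) ^ w" unfolding s_def by (simp add: sum_distrib_left sum_distrib_right)
    finally show "(\<Sum>c\<in>{1..<m}. z ^ (n + w * m + c) * t ^ c) = (z ^ n * s) * (z ^ m) ^ w" .
  qed
  also have "\<dots> = (z ^ n * s) * G" unfolding G_def by (rule infsum_cmult_right')
  finally have I2: "infsum (\<lambda>w. \<Sum>c\<in>{1..<m}. z ^ (n + w * m + c) * t ^ c) UNIV = (z ^ n * s) * G" .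
  have "1 + s = (\<Sum>c<m. (z * t) ^ c)"
  proof -
    obtain k where k: "m = Suc k" using m by (cases m) auto
    have "{1..<m} = {1..k}" using k by auto
    then show ?thesis unfolding s_def using geo_shift[where x = "z * t" and m = k] k by simp
  qed
  also have "\<dots> = (1 - (t * z) ^ m) / (1 - t * z)" using sum_gp_strict[of "z * t" m] tz1 by (simp add: mult.commute)
  finally have s1: "1 + s = (1 - (t * z) ^ m) / (1 - t * z)" .
  have "z ^ n * G + (z ^ n * s) * G = (1 + s) * G * z ^ n" by (simp add: algebra_simps)
  then show ?thesis unfolding I1 I2 s1 G by simp
qed



lemma MS_sub: assumes "good S" shows "MS S \<subseteq> {\<alpha>. partition \<alpha>}"
proof
  fix \<beta> assume "\<beta> \<in> MS S"
  then obtain \<alpha> w where "\<alpha> \<in> S" "\<beta> = padd \<alpha> (rect w (mult \<alpha>))" unfolding MS_def Mset_def by blast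
  then show "\<beta> \<in> {\<alpha>. partition \<alpha>}" using assms part_padd part_rect unfolding good_def by auto
qed

lemma NS_sub: assumes "good S" shows "NS S \<subseteq> {\<alpha>. partition \<alpha>}"
proof
  fix \<beta> assume "\<beta> \<in> NS S"
  then obtain \<alpha> w c where "\<alpha> \<in> S" "\<beta> = padd (padd \<alpha> (rect w (mult \<alpha>))) (rect 1 c)" unfolding NS_def Nset_def by blast
  then show "\<beta> \<in> {\<alpha>. partition \<alpha>}" using assms part_padd part_rect unfolding good_def by auto
qed

lemma N_identity:
  assumes g: "good S" and mg: "mgood S" and z: "norm z < 1" and t: "norm t \<le> 1"
  shows "opN (coeffs S) z t = F (MS S) z 1 + F (NS S) z t"
proof -
  have Sp: "S \<subseteq> {\<alpha>. partition \<alpha>}" using g by (rule good_sub)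
  have pos: "partition \<alpha> \<and> 0 < \<alpha> 0" if "\<alpha> \<in> S" for \<alpha> using g that unfolding good_def by auto
  have mpos: "1 \<le> mult \<alpha>" if "\<alpha> \<in> S" for \<alpha> using mult_pos pos[OF that] by (simp add: Suc_le_eq)
  have wpos: "0 < weight \<alpha>" if "\<alpha> \<in> S" for \<alpha> using weight_pos_iff pos[OF that] by simp
  have c0: "coeffs S n 0 = 0" for n
  proof -
    have e: "{\<alpha>\<in>S. weight \<alpha> = n \<and> mult \<alpha> = 0} = {}" using mpos by fastforce
    show ?thesis unfolding coeffs_def e by (rule card.empty)
  qed
  have c0': "coeffs S 0 m = 0" for m
  proof -
    have e: "{\<alpha>\<in>S. weight \<alpha> = 0 \<and> mult \<alpha> = m} = {}" using wpos by fastforce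
    show ?thesis unfolding coeffs_def e by (rule card.empty)
  qed
  define h where "h n m = (1 / (1 - z ^ m)) * ((1 - (t * z) ^ m) / (1 - t * z)) * z ^ n" for n m :: nat
  have gf0: "gf (coeffs S) z 0 = 0" unfolding gf_def
  proof (rule infsum_0)
    fix x :: "nat \<times> nat"
    obtain n m where x: "x = (n, m)" by fastforce
    show "(\<lambda>(n, m). of_nat (coeffs S n m) * z ^ n * 0 ^ m) x = 0"
      using x c0 by (cases m) simp_all
  qed
  have X: "infsum (\<lambda>(n, m). of_nat (coeffs S n m) * (1 / (1 - z ^ m)) * ((1 - (t * z) ^ m) / (1 - t * z)) * z ^ n)
        {(n, m). 1 \<le> n \<and> 1 \<le> m} = infsum (\<lambda>(n, m). of_nat (coeffs S n m) * h n m) UNIV"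
  proof (rule infsum_cong_neutral)
    fix x :: "nat \<times> nat" assume "x \<in> UNIV - {(n, m). 1 \<le> n \<and> 1 \<le> m}"
    then obtain n m where x: "x = (n, m)" "n = 0 \<or> m = 0" by fastforce
    then show "(\<lambda>(n, m). of_nat (coeffs S n m) * h n m) x = 0" using c0 c0' by auto
  next
    fix x :: "nat \<times> nat" assume "x \<in> {(n, m). 1 \<le> n \<and> 1 \<le> m} - UNIV" then show "(\<lambda>(n, m). of_nat (coeffs S n m) * (1 / (1 - z ^ m)) * ((1 - (t * z) ^ m) / (1 - t * z)) * z ^ n) x = 0" by simp
  next
    fix x :: "nat \<times> nat"
    obtain n m where x: "x = (n, m)" by fastforce
    show "(\<lambda>(n, m). of_nat (coeffs S n m) * (1 / (1 - z ^ m)) * ((1 - (t * z) ^ m) / (1 - t * z)) * z ^ n) x = (\<lambda>(n, m). of_nat (coeffs S n m) * h n m) x"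
      using x by (simp add: h_def mult.assoc)
  qed
  have sh: "(\<lambda>\<alpha>. h (weight \<alpha>) (mult \<alpha>)) summable_on S"
  proof (rule csummable[OF Sp z])
    fix \<alpha> assume "\<alpha> \<in> S"
    show "norm (h (weight \<alpha>) (mult \<alpha>)) \<le> (1 / (1 - norm z)) ^ 2 * norm z ^ weight \<alpha>"
      unfolding h_def by (rule h_bound[OF z t mpos[OF \<open>\<alpha> \<in> S\<close>]])
  qed
  have LHS: "opN (coeffs S) z t = infsum (\<lambda>\<alpha>. h (weight \<alpha>) (mult \<alpha>)) S"
    unfolding opN_def gf0 X by (simp add: infsum_coeffs[OF Sp sh])
  have MSp: "MS S \<subseteq> {\<alpha>. partition \<alpha>}" using g by (rule MS_sub)
  have FM0: "F (MS S) z 1 = infsum (\<lambda>\<beta>. z ^ weight \<beta>) (MS S)"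
    and sFM0: "(\<lambda>\<beta>. z ^ weight \<beta>) summable_on (MS S)"
    using F_eq[OF MSp z, of 1] by simp_all
  have injM: "inj_on mmap (S \<times> UNIV)" using g mg by (rule mmap_inj)
  have compM: "((\<lambda>\<beta>. z ^ weight \<beta>) \<circ> mmap) x = (\<lambda>(\<alpha>, w). z ^ (weight \<alpha> + w * mult \<alpha>)) x"
    if "x \<in> S \<times> UNIV" for x
  proof -
    obtain \<alpha> w where x: "x = (\<alpha>, w)" by fastforce
    have "partition \<alpha>" using that x pos by auto
    then have "weight (padd \<alpha> (rect w (mult \<alpha>))) = weight \<alpha> + w * mult \<alpha>"
      using weight_padd[OF _ part_rect] weight_rect by simp
    then show ?thesis using x by (simp add: mmap_def)
  qed
  have sMsig: "(\<lambda>(\<alpha>, w). z ^ (weight \<alpha> + w * mult \<alpha>)) summable_on (S \<times> UNIV)"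
  proof -
    have h: "(\<lambda>\<beta>. z ^ weight \<beta>) summable_on (mmap ` (S \<times> UNIV))"
      unfolding MS_image[symmetric] by (rule sFM0)
    have "((\<lambda>\<beta>. z ^ weight \<beta>) \<circ> mmap) summable_on (S \<times> UNIV)"
      using h by (simp only: summable_on_reindex[OF injM])
    then show ?thesis using compM summable_on_cong by (metis (no_types, lifting))
  qed
  define IM where "IM \<alpha> = infsum (\<lambda>w. z ^ (weight \<alpha> + w * mult \<alpha>)) UNIV" for \<alpha>
  have FM: "F (MS S) z 1 = infsum IM S"
  proof -
    have "F (MS S) z 1 = infsum (\<lambda>\<beta>. z ^ weight \<beta>) (mmap ` (S \<times> UNIV))"
      unfolding MS_image[symmetric] by (rule FM0)
    also have "\<dots> = infsum ((\<lambda>\<beta>. z ^ weight \<beta>) \<circ> mmap) (S \<times> UNIV)"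
      by (rule infsum_reindex[OF injM])
    also have "\<dots> = infsum (\<lambda>(\<alpha>, w). z ^ (weight \<alpha> + w * mult \<alpha>)) (S \<times> UNIV)"
      by (rule infsum_cong) (rule compM)
    also have "\<dots> = infsum IM S" unfolding IM_def
      by (rule infsum_Sigma'_banach[symmetric]) (use sMsig in simp)
    finally show ?thesis .
  qed
  have sIM: "IM summable_on S" unfolding IM_def
    by (rule summable_on_Sigma_banach) (use sMsig in simp)
  have NSp: "NS S \<subseteq> {\<alpha>. partition \<alpha>}" using g by (rule NS_sub)
  have FN0: "F (NS S) z t = infsum (\<lambda>\<beta>. z ^ weight \<beta> * t ^ mult \<beta>) (NS S)"
    and sFN0: "(\<lambda>\<beta>. z ^ weight \<beta> * t ^ mult \<beta>) summable_on (NS S)"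
    using F_eq[OF NSp z t] by simp_all
  define Nsig where "Nsig = Sigma S (\<lambda>\<alpha>. (UNIV :: nat set) \<times> {1..<mult \<alpha>})"
  define GN where "GN \<alpha> p = (case p of (w, c) \<Rightarrow> z ^ (weight \<alpha> + w * mult \<alpha> + c) * t ^ c)" for \<alpha> and p :: "nat \<times> nat"
  have injN: "inj_on nmap Nsig" unfolding Nsig_def using g mg by (rule nmap_inj)
  have compN: "((\<lambda>\<beta>. z ^ weight \<beta> * t ^ mult \<beta>) \<circ> nmap) x = (\<lambda>(\<alpha>, p). GN \<alpha> p) x"
    if "x \<in> Nsig" for x
  proof -
    obtain \<alpha> w c where x: "x = (\<alpha>, (w, c))" by (metis prod.exhaust)
    have a: "\<alpha> \<in> S" "0 < c" "c < mult \<alpha>" using that x unfolding Nsig_def by auto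
    have pa: "partition \<alpha>" "0 < \<alpha> 0" using pos[OF a(1)] by auto
    have "weight (padd (padd \<alpha> (rect w (mult \<alpha>))) (rect 1 c)) = weight \<alpha> + w * mult \<alpha> + c"
      using weight_padd[OF part_padd[OF pa(1) part_rect] part_rect] weight_padd[OF pa(1) part_rect] weight_rect by simp
    moreover have "mult (padd (padd \<alpha> (rect w (mult \<alpha>))) (rect 1 c)) = c" using mult_N[OF pa a(2,3)] by simp
    ultimately show ?thesis using x by (simp add: nmap_def GN_def)
  qed
  have sNsig: "(\<lambda>(\<alpha>, p). GN \<alpha> p) summable_on Nsig"
  proof -
    have h: "(\<lambda>\<beta>. z ^ weight \<beta> * t ^ mult \<beta>) summable_on (nmap ` Nsig)"
      unfolding Nsig_def NS_image[symmetric] by (rule sFN0)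
    have "((\<lambda>\<beta>. z ^ weight \<beta> * t ^ mult \<beta>) \<circ> nmap) summable_on Nsig"
      using h by (simp only: summable_on_reindex[OF injN])
    then show ?thesis using compN summable_on_cong by (metis (no_types, lifting))
  qed
  define IN where "IN \<alpha> = infsum (GN \<alpha>) (UNIV \<times> {1..<mult \<alpha>})" for \<alpha>
  have FN: "F (NS S) z t = infsum IN S"
  proof -
    have "F (NS S) z t = infsum (\<lambda>\<beta>. z ^ weight \<beta> * t ^ mult \<beta>) (nmap ` Nsig)"
      unfolding Nsig_def NS_image[symmetric] by (rule FN0)
    also have "\<dots> = infsum ((\<lambda>\<beta>. z ^ weight \<beta> * t ^ mult \<beta>) \<circ> nmap) Nsig"
      by (rule infsum_reindex[OF injN])
    also have "\<dots> = infsum (\<lambda>(\<alpha>, p). GN \<alpha> p) Nsig"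
      by (rule infsum_cong) (rule compN)
    also have "\<dots> = infsum IN S" unfolding IN_def Nsig_def
      by (rule infsum_Sigma'_banach[symmetric]) (use sNsig in \<open>simp add: Nsig_def\<close>)
    finally show ?thesis .
  qed
  have sIN: "IN summable_on S" unfolding IN_def
    by (rule summable_on_Sigma_banach) (use sNsig in \<open>simp add: Nsig_def\<close>)
  have IN_eq: "IN \<alpha> = infsum (\<lambda>w. \<Sum>c\<in>{1..<mult \<alpha>}. z ^ (weight \<alpha> + w * mult \<alpha> + c) * t ^ c) UNIV"
    if "\<alpha> \<in> S" for \<alpha>
  proof -
    have sl: "GN \<alpha> summable_on (UNIV \<times> {1..<mult \<alpha>})"
      using summable_on_SigmaD1[of GN S "\<lambda>\<alpha>. UNIV \<times> {1..<mult \<alpha>}" \<alpha>] sNsig that unfolding Nsig_def by simp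
    have "IN \<alpha> = infsum (\<lambda>(w, c). GN \<alpha> (w, c)) (UNIV \<times> {1..<mult \<alpha>})" unfolding IN_def by (simp add: split_def)
    also have "\<dots> = infsum (\<lambda>w. infsum (\<lambda>c. GN \<alpha> (w, c)) {1..<mult \<alpha>}) UNIV"
      by (rule infsum_Sigma'_banach[symmetric]) (use sl in \<open>simp add: split_def\<close>)
    also have "\<dots> = infsum (\<lambda>w. \<Sum>c\<in>{1..<mult \<alpha>}. z ^ (weight \<alpha> + w * mult \<alpha> + c) * t ^ c) UNIV"
      by (simp add: GN_def)
    finally show ?thesis .
  qed
  have "F (MS S) z 1 + F (NS S) z t = infsum (\<lambda>\<alpha>. IM \<alpha> + IN \<alpha>) S"
    unfolding FM FN by (rule infsum_add[OF sIM sIN, symmetric])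
  also have "\<dots> = infsum (\<lambda>\<alpha>. h (weight \<alpha>) (mult \<alpha>)) S"
  proof (rule infsum_cong)
    fix \<alpha> assume "\<alpha> \<in> S"
    show "IM \<alpha> + IN \<alpha> = h (weight \<alpha>) (mult \<alpha>)"
      unfolding IN_eq[OF \<open>\<alpha> \<in> S\<close>] IM_def h_def by (rule N_term[OF z t mpos[OF \<open>\<alpha> \<in> S\<close>]])
  qed
  finally show ?thesis using LHS by simp
qed


theorem mainTheorem4:
  fixes \<mu> :: "nat \<Rightarrow> nat" and S :: "(nat \<Rightarrow> nat) set"
  assumes "strict_partition \<mu>"
    and "S = Q \<mu> (padd \<mu> (rect 1 1))"
  shows "\<forall>z t. norm z < 1 \<longrightarrow> norm t \<le> 1 \<longrightarrow>
           opE (coeffs S) z t = F S z 1 + F (ES S) z t \<and>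
           opN (coeffs S) z t = F (MS S) z 1 + F (NS S) z t"
proof -
  have pmu: "partition \<mu>" using assms(1) unfolding strict_partition_def by simp
  have g: "good S" unfolding good_def assms(2) using Q_part Q_pos by blast
  have mg: "mgood S"
  proof (cases "\<mu> 0 = 0")
    case True
    then have "S = {}" using S_empty[OF pmu] assms(2) by simp
    then show ?thesis unfolding mgood_def by simp
  next
    case False
    then have "0 < \<mu> 0" by simp
    then show ?thesis unfolding mgood_def assms(2) using M_notin[OF assms(1)] by blast
  qed
  show ?thesis
  proof (intro allI impI conjI)
    fix z t :: complex assume z: "norm z < 1" and t: "norm t \<le> 1"
    show "opE (coeffs S) z t = F S z 1 + F (ES S) z t" by (rule E_identity[OF g z t])
    show "opN (coeffs S) z t = F (MS S) z 1 + F (NS S) z t" by (rule N_identity[OF g mg z t])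
  qed
qed

end
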